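(* Let $W_1,\dots,W_n$ be proper subspaces of $\mathbb R^d$ with orthogonal projections $P_1,\dots,P_n$, and let $n_i=\dim W_i$. Let $a_1,\dots,a_n\in\mathbb R$ and $0<A\in\mathbb R$. The following are equivalent: (1) For every choice of orthonormal bases $\{u_{i,j}\}_{j=1}^{n_i}$ of $W_i$ ($i=1,\dots,n$), the family $\{a_iu_{i,j}\}_{i=1,\dots,n;\,j=1,\dots,n_i}$ is an $A$-tight frame for $\mathbb R^d$. (2) For some choice of orthonormal bases $\{u_{i,j}\}_{j=1}^{n_i}$ of $W_i$, the family $\{a_iu_{i,j}\}_{i,j}$ is an $A$-tight frame for $\mathbb R^d$. (3) $\sum_{i=1}^n a_i^2P_i=A\cdot I$. (4) $\sum_{i=1}^n a_i^2(I-P_i)=\left(\sum_{i=1}^n a_i^2-A\right)\cdot I$. (5) For every choice of orthonormal bases $\{v_{i,j}\}_{j=1}^{d-n_i}$ of $W_i^\perp$, the family $\{a_iv_{i,j}\}_{i,j}$ is a $\left(\sum_{i=1}^n a_i^2-A\right)$-tight frame for $\mathbb R^d$. (6) For some choice of orthonormal bases $\{v_{i,j}\}_{j=1}^{d-n_i}$ of $W_i^\perp$, the family $\{a_iv_{i,j}\}_{i,j}$ is a $\left(\sum_{i=1}^n a_i^2-A\right)$-tight frame for $\mathbb R^d$.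
   Context: A family $\{\psi_k\}$ in $\mathbb R^d$ is a $B$-tight frame ($B>0$) if $\sum_k|\langle x,\psi_k\rangle|^2=B\|x\|^2$ for all $x\in\mathbb R^d$. A proper subspace is a subspace different from $\mathbb R^d$. *)

theory Defs
  imports "HOL-Analysis.Analysis"
begin

definition orth_proj :: "'a::euclidean_space set \<Rightarrow> 'a \<Rightarrow> 'a" where
  "orth_proj W x = (THE y. y \<in> W \<and> (\<forall>w\<in>W. (x - y) \<bullet> w = 0))"

definition is_onb :: "'a::euclidean_space set \<Rightarrow> nat \<Rightarrow> (nat \<Rightarrow> 'a) \<Rightarrow> bool" where
  "is_onb W m u \<longleftrightarrow>
     (\<forall>j<m. \<forall>k<m. u j \<bullet> u k = (if j = k then 1 else 0)) \<and> span (u ` {..<m}) = W"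

definition tight_frame :: "real \<Rightarrow> 'i set \<Rightarrow> ('i \<Rightarrow> 'a::euclidean_space) \<Rightarrow> bool" where
  "tight_frame B I psi \<longleftrightarrow> B > 0 \<and> (\<forall>x. (\<Sum>k\<in>I. (x \<bullet> psi k)\<^sup>2) = B * (norm x)\<^sup>2)"

end

theory Submission
  imports Defs
begin

lemma proj_unique:
  fixes W :: "'a::euclidean_space set"
  assumes "subspace W" "y \<in> W" "\<forall>w\<in>W. (x - y) \<bullet> w = 0"
  shows "orth_proj W x = y"
  unfolding orth_proj_def
proof (rule the_equality)
  show "y \<in> W \<and> (\<forall>w\<in>W. (x - y) \<bullet> w = 0)" using assms by blast
next
  fix y' assume h: "y' \<in> W \<and> (\<forall>w\<in>W. (x - y') \<bullet> w = 0)"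
  have d: "y - y' \<in> W" using assms h by (simp add: subspace_diff)
  have "(y - y') \<bullet> (y - y') = (x - y') \<bullet> (y - y') - (x - y) \<bullet> (y - y')"
    by (simp add: algebra_simps)
  also have "\<dots> = 0" using d h assms by simp
  finally show "y' = y" by simp
qed

lemma proj_exists:
  fixes W :: "'a::euclidean_space set"
  assumes "subspace W"
  shows "orth_proj W x \<in> W \<and> (\<forall>w\<in>W. (x - orth_proj W x) \<bullet> w = 0)"
proof -
  obtain y z where y: "y \<in> span W" and z: "\<And>w. w \<in> span W \<Longrightarrow> orthogonal z w" and x: "x = y + z"
    using orthogonal_subspace_decomp_exists [of W x] by metis
  have yW: "y \<in> W" using y assms by (metis span_eq_iff)
  have o: "\<forall>w\<in>W. (x - y) \<bullet> w = 0" using z x assms span_eq_iff[of W] by (simp add: orthogonal_def) (metis span_base)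
  have "orth_proj W x = y" by (rule proj_unique[OF assms yW o])
  with yW o show ?thesis by simp
qed

lemma proj_onb:
  fixes W :: "'a::euclidean_space set"
  assumes "is_onb W m u"
  shows "orth_proj W x = (\<Sum>j<m. (x \<bullet> u j) *\<^sub>R u j)"
proof -
  have on: "\<forall>j<m. \<forall>k<m. u j \<bullet> u k = (if j = k then 1 else 0)" and sp: "span (u ` {..<m}) = W"
    using assms unfolding is_onb_def by auto
  have sW: "subspace W" using sp subspace_span by metis
  let ?y = "\<Sum>j<m. (x \<bullet> u j) *\<^sub>R u j"
  have yW: "?y \<in> W" unfolding sp[symmetric]
    by (intro span_sum span_mul span_base) auto
  have ok: "(x - ?y) \<bullet> u k = 0" if "k < m" for k
  proof -
    have "?y \<bullet> u k = (\<Sum>j<m. (x \<bullet> u j) * (u j \<bullet> u k))" by (simp add: inner_sum_left)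
    also have "\<dots> = (\<Sum>j<m. if j = k then x \<bullet> u k else 0)"
      using on that by (intro sum.cong) auto
    also have "\<dots> = x \<bullet> u k" using that by simp
    finally show ?thesis by (simp add: inner_diff_left)
  qed
  have "\<forall>w\<in>W. (x - ?y) \<bullet> w = 0"
  proof
    fix w assume "w \<in> W"
    then have "w \<in> span (u ` {..<m})" using sp by simp
    then show "(x - ?y) \<bullet> w = 0"
      by (induction rule: span_induct) (auto simp: ok subspace_hyperplane)
  qed
  then show ?thesis using proj_unique[OF sW yW] by blast
qed

lemma onb_sum:
  fixes W :: "'a::euclidean_space set"
  assumes "is_onb W m u"
  shows "(\<Sum>j<m. (x \<bullet> u j)\<^sup>2) = x \<bullet> orth_proj W x"
  using proj_onb[OF assms] by (simp add: inner_sum_right power2_eq_square)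

lemma proj_add:
  fixes W :: "'a::euclidean_space set"
  assumes "subspace W"
  shows "orth_proj W (x + y) = orth_proj W x + orth_proj W y"
  using proj_exists[OF assms, of x] proj_exists[OF assms, of y]
  by (intro proj_unique[OF assms]) (auto simp: subspace_add[OF assms] algebra_simps inner_diff_left inner_add_left)

lemma proj_sym:
  fixes W :: "'a::euclidean_space set"
  assumes "subspace W"
  shows "x \<bullet> orth_proj W y = orth_proj W x \<bullet> orth_proj W y"
proof -
  have "(x - orth_proj W x) \<bullet> orth_proj W y = 0" using proj_exists[OF assms] by blast
  then show ?thesis by (simp add: inner_diff_left)
qed

lemma proj_comp:
  fixes W :: "'a::euclidean_space set"
  assumes "subspace W"
  shows "orth_proj (orthogonal_comp W) x = x - orth_proj W x"
proof (rule proj_unique[OF subspace_orthogonal_comp])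
  show "x - orth_proj W x \<in> orthogonal_comp W"
    using proj_exists[OF assms, of x]
    by (auto simp: orthogonal_comp_def orthogonal_def inner_commute)
  show "\<forall>w\<in>orthogonal_comp W. (x - (x - orth_proj W x)) \<bullet> w = 0"
    using proj_exists[OF assms, of x] by (auto simp: orthogonal_comp_def orthogonal_def)
qed

lemma exists_onb:
  fixes W :: "'a::euclidean_space set"
  assumes "subspace W"
  shows "\<exists>u. is_onb W (dim W) u"
proof -
  obtain B where B: "B \<subseteq> W" "pairwise orthogonal B" "\<And>x. x \<in> B \<Longrightarrow> norm x = 1"
    "independent B" "card B = dim W" "span B = W"
    using orthonormal_basis_subspace[OF assms] by metis
  have "finite B" using B(4) independent_imp_finite by blast
  then obtain h where h: "bij_betw h {0..<card B} B" using ex_bij_betw_nat_finite by blast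
  have hB: "h ` {..<dim W} = B" using h B(5) by (simp add: bij_betw_def atLeast0LessThan)
  have inj: "inj_on h {..<dim W}" using h B(5) by (simp add: bij_betw_def atLeast0LessThan)
  have "\<forall>j<dim W. \<forall>k<dim W. h j \<bullet> h k = (if j = k then 1 else 0)"
  proof (intro allI impI)
    fix j k assume jk: "j < dim W" "k < dim W"
    show "h j \<bullet> h k = (if j = k then 1 else 0)"
    proof (cases "j = k")
      case True
      then have "norm (h j) = 1" using B(3) hB jk by blast
      then show ?thesis using True by (simp add: norm_eq_1)
    next
      case False
      then have "h j \<noteq> h k" using inj jk by (meson inj_on_contraD lessThan_iff)
      moreover have "h j \<in> B" "h k \<in> B" using hB jk by auto
      ultimately show ?thesis using B(2) False by (auto simp: pairwise_def orthogonal_def)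
    qed
  qed
  then show ?thesis unfolding is_onb_def using hB B(6) by blast
qed

lemma dim_comp:
  fixes W :: "'a::euclidean_space set"
  assumes "subspace W"
  shows "dim (orthogonal_comp W) = DIM('a) - dim W"
proof -
  have "dim {y \<in> UNIV. \<forall>x \<in> W. orthogonal x y} + dim W = dim (UNIV::'a set)"
    by (rule dim_subspace_orthogonal_to_vectors) (auto simp: assms)
  moreover have "{y \<in> UNIV. \<forall>x \<in> W. orthogonal x y} = orthogonal_comp W"
    by (auto simp: orthogonal_comp_def)
  ultimately show ?thesis by (simp add: dim_UNIV)
qed

lemma polar:
  fixes T :: "'a::euclidean_space \<Rightarrow> 'a"
  assumes add: "\<And>x y. T (x + y) = T x + T y"
    and sym: "\<And>x y. x \<bullet> T y = T x \<bullet> y"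
    and q: "\<And>x. x \<bullet> T x = B * (x \<bullet> x)"
  shows "T y = B *\<^sub>R y"
proof -
  have bil: "x \<bullet> T y = B * (x \<bullet> y)" for x
  proof -
    have "(x + y) \<bullet> T (x + y) = B * ((x + y) \<bullet> (x + y))" by (rule q)
    then have "x \<bullet> T x + x \<bullet> T y + y \<bullet> T x + y \<bullet> T y = B * (x \<bullet> x + 2 * (x \<bullet> y) + y \<bullet> y)"
      by (simp add: add inner_add_left inner_add_right inner_commute algebra_simps)
    moreover have "y \<bullet> T x = x \<bullet> T y" using sym[of y x] by (simp add: inner_commute)
    ultimately show ?thesis using q[of x] q[of y] by (simp add: algebra_simps)
  qed
  have "(T y - B *\<^sub>R y) \<bullet> (T y - B *\<^sub>R y) = (T y - B *\<^sub>R y) \<bullet> T y - B * ((T y - B *\<^sub>R y) \<bullet> y)"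
    by (simp add: inner_diff_right)
  also have "\<dots> = 0" using bil[of "T y - B *\<^sub>R y"] by simp
  finally show ?thesis by simp
qed

lemma generic:
  fixes V :: "nat \<Rightarrow> 'a::euclidean_space set"
  assumes sub: "\<And>i. i < n \<Longrightarrow> subspace (V i)"
    and onb: "\<And>i. i < n \<Longrightarrow> is_onb (V i) (m i) (u i)"
  shows "tight_frame B (SIGMA i:{..<n}. {..<m i}) (\<lambda>(i, j). a i *\<^sub>R u i j) \<longleftrightarrow>
    B > 0 \<and> (\<forall>x. (\<Sum>i<n. (a i)\<^sup>2 *\<^sub>R orth_proj (V i) x) = B *\<^sub>R x)"
proof -
  define T where "T x = (\<Sum>i<n. (a i)\<^sup>2 *\<^sub>R orth_proj (V i) x)" for x
  have fs: "(\<Sum>k\<in>(SIGMA i:{..<n}. {..<m i}). (x \<bullet> (\<lambda>(i, j). a i *\<^sub>R u i j) k)\<^sup>2) = x \<bullet> T x" for x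
  proof -
    have "(\<Sum>k\<in>(SIGMA i:{..<n}. {..<m i}). (x \<bullet> (\<lambda>(i, j). a i *\<^sub>R u i j) k)\<^sup>2)
        = (\<Sum>i<n. \<Sum>j<m i. (x \<bullet> (a i *\<^sub>R u i j))\<^sup>2)"
      by (subst sum.Sigma) (auto simp: case_prod_beta)
    also have "\<dots> = (\<Sum>i<n. (a i)\<^sup>2 * (\<Sum>j<m i. (x \<bullet> u i j)\<^sup>2))"
      by (simp add: sum_distrib_left power_mult_distrib)
    also have "\<dots> = (\<Sum>i<n. (a i)\<^sup>2 * (x \<bullet> orth_proj (V i) x))"
      using onb_sum[OF onb] by simp
    also have "\<dots> = x \<bullet> T x" by (simp add: T_def inner_sum_right)
    finally show ?thesis .
  qed
  have add: "T (x + y) = T x + T y" for x y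
  proof -
    have "T (x + y) = (\<Sum>i<n. (a i)\<^sup>2 *\<^sub>R orth_proj (V i) x + (a i)\<^sup>2 *\<^sub>R orth_proj (V i) y)"
      unfolding T_def by (intro sum.cong refl) (simp add: proj_add sub scaleR_add_right)
    then show ?thesis by (simp add: T_def sum.distrib)
  qed
  have sym: "x \<bullet> T y = T x \<bullet> y" for x y
  proof -
    have "x \<bullet> T y = (\<Sum>i<n. (a i)\<^sup>2 * (x \<bullet> orth_proj (V i) y))"
      by (simp add: T_def inner_sum_right)
    also have "\<dots> = (\<Sum>i<n. (a i)\<^sup>2 * (orth_proj (V i) x \<bullet> orth_proj (V i) y))"
    proof (intro sum.cong refl)
      fix i assume "i \<in> {..<n}"
      then have "x \<bullet> orth_proj (V i) y = orth_proj (V i) x \<bullet> orth_proj (V i) y"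
        using proj_sym[OF sub, of i x y] by simp
      then show "(a i)\<^sup>2 * (x \<bullet> orth_proj (V i) y) = (a i)\<^sup>2 * (orth_proj (V i) x \<bullet> orth_proj (V i) y)"
        by simp
    qed
    also have "\<dots> = (\<Sum>i<n. (a i)\<^sup>2 * (orth_proj (V i) x \<bullet> y))"
    proof (intro sum.cong refl)
      fix i assume "i \<in> {..<n}"
      then have "y \<bullet> orth_proj (V i) x = orth_proj (V i) y \<bullet> orth_proj (V i) x"
        using proj_sym[OF sub, of i y x] by simp
      then show "(a i)\<^sup>2 * (orth_proj (V i) x \<bullet> orth_proj (V i) y) = (a i)\<^sup>2 * (orth_proj (V i) x \<bullet> y)"
        by (simp add: inner_commute)
    qed
    also have "\<dots> = T x \<bullet> y"
      by (simp add: T_def inner_sum_left)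
    finally show ?thesis .
  qed
  show ?thesis
    unfolding tight_frame_def fs T_def[symmetric]
  proof (intro iffI conjI allI)
    assume h: "0 < B \<and> (\<forall>x. x \<bullet> T x = B * (norm x)\<^sup>2)"
    then show "0 < B" by simp
    fix x show "T x = B *\<^sub>R x"
      by (rule polar[OF add sym]) (use h in \<open>simp add: power2_norm_eq_inner\<close>)
  next
    assume h: "0 < B \<and> (\<forall>x. T x = B *\<^sub>R x)"
    then show "0 < B" by simp
    fix x show "x \<bullet> T x = B * (norm x)\<^sup>2" using h by (simp add: power2_norm_eq_inner)
  qed
qed

theorem mainTheorem1:
  fixes W :: "nat \<Rightarrow> 'a::euclidean_space set"
    and n :: nat and a :: "nat \<Rightarrow> real" and A :: real
  assumes sub: "\<And>i. i < n \<Longrightarrow> subspace (W i)"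
    and proper: "\<And>i. i < n \<Longrightarrow> W i \<noteq> UNIV"
    and Apos: "0 < A"
  defines "S1 \<equiv> (\<forall>u. (\<forall>i<n. is_onb (W i) (dim (W i)) (u i)) \<longrightarrow>
          tight_frame A (SIGMA i:{..<n}. {..<dim (W i)}) (\<lambda>(i, j). a i *\<^sub>R u i j))"
    and "S2 \<equiv> (\<exists>u. (\<forall>i<n. is_onb (W i) (dim (W i)) (u i)) \<and>
          tight_frame A (SIGMA i:{..<n}. {..<dim (W i)}) (\<lambda>(i, j). a i *\<^sub>R u i j))"
    and "S3 \<equiv> (\<forall>x. (\<Sum>i<n. (a i)\<^sup>2 *\<^sub>R orth_proj (W i) x) = A *\<^sub>R x)"
    and "S4 \<equiv> (\<forall>x. (\<Sum>i<n. (a i)\<^sup>2 *\<^sub>R (x - orth_proj (W i) x)) = ((\<Sum>i<n. (a i)\<^sup>2) - A) *\<^sub>R x)"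
    and "S5 \<equiv> (\<forall>v. (\<forall>i<n. is_onb (orthogonal_comp (W i)) (DIM('a) - dim (W i)) (v i)) \<longrightarrow>
          tight_frame ((\<Sum>i<n. (a i)\<^sup>2) - A) (SIGMA i:{..<n}. {..<DIM('a) - dim (W i)})
            (\<lambda>(i, j). a i *\<^sub>R v i j))"
    and "S6 \<equiv> (\<exists>v. (\<forall>i<n. is_onb (orthogonal_comp (W i)) (DIM('a) - dim (W i)) (v i)) \<and>
          tight_frame ((\<Sum>i<n. (a i)\<^sup>2) - A) (SIGMA i:{..<n}. {..<DIM('a) - dim (W i)})
            (\<lambda>(i, j). a i *\<^sub>R v i j))"
  shows "(S1 \<longleftrightarrow> S2) \<and> (S2 \<longleftrightarrow> S3) \<and> (S3 \<longleftrightarrow> S4) \<and> (S4 \<longleftrightarrow> S5) \<and> (S5 \<longleftrightarrow> S6)"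
proof -
  define P where "P i x = orth_proj (W i) x" for i x
  have S34: "S3 \<longleftrightarrow> S4"
  proof -
    have e: "(\<Sum>i<n. (a i)\<^sup>2 *\<^sub>R (x - orth_proj (W i) x)) = (\<Sum>i<n. (a i)\<^sup>2) *\<^sub>R x - (\<Sum>i<n. (a i)\<^sup>2 *\<^sub>R orth_proj (W i) x)" for x
      by (simp add: scaleR_diff_right sum_subtractf scaleR_sum_left)
    show ?thesis unfolding S3_def S4_def e
      by (auto simp: algebra_simps scaleR_diff_left)
  qed
  have pos: "(\<Sum>i<n. (a i)\<^sup>2) - A > 0" if S3 
  proof -
    have s3: "\<And>x. (\<Sum>i<n. (a i)\<^sup>2 *\<^sub>R orth_proj (W i) x) = A *\<^sub>R x" using that S3_def by simp
    have s4: "\<And>x. (\<Sum>i<n. (a i)\<^sup>2 *\<^sub>R (x - orth_proj (W i) x)) = ((\<Sum>i<n. (a i)\<^sup>2) - A) *\<^sub>R x"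
      using that S34 S4_def by simp
    obtain i where i: "i < n" "a i \<noteq> 0"
    proof (rule ccontr)
      assume "\<not> thesis"
      then have "\<forall>i<n. a i = 0" using that by blast
      then have "A *\<^sub>R x = 0" for x :: 'a using s3[of x] by simp
      moreover obtain b :: 'a where "b \<in> Basis" using nonempty_Basis by blast
      ultimately show False using Apos by (metis nonzero_Basis scaleR_eq_0_iff less_irrefl)
    qed
    obtain x where x: "x \<notin> W i" using proper[OF i(1)] by blast
    have xp: "x - orth_proj (W i) x \<noteq> 0"
      using x proj_exists[OF sub[OF i(1)], of x] by auto
    have nn: "x \<bullet> (x - orth_proj (W k) x) = (x - orth_proj (W k) x) \<bullet> (x - orth_proj (W k) x)" if "k < n" for k
    proof -
      have "orth_proj (W k) x \<bullet> (x - orth_proj (W k) x) = 0"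
        using proj_exists[OF sub[OF that], of x] by (simp add: inner_commute)
      then show ?thesis by (simp add: inner_diff_left)
    qed
    have "x \<bullet> (\<Sum>k<n. (a k)\<^sup>2 *\<^sub>R (x - orth_proj (W k) x)) = (\<Sum>k<n. (a k)\<^sup>2 * ((x - orth_proj (W k) x) \<bullet> (x - orth_proj (W k) x)))"
      by (simp add: inner_sum_right nn)
    also have "\<dots> \<ge> (a i)\<^sup>2 * ((x - orth_proj (W i) x) \<bullet> (x - orth_proj (W i) x))"
      by (rule member_le_sum) (use i in auto)
    finally have "((\<Sum>i<n. (a i)\<^sup>2) - A) * (x \<bullet> x) \<ge> (a i)\<^sup>2 * ((x - orth_proj (W i) x) \<bullet> (x - orth_proj (W i) x))"
      using s4[of x] by simp
    moreover have "(a i)\<^sup>2 * ((x - orth_proj (W i) x) \<bullet> (x - orth_proj (W i) x)) > 0"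
      using i xp by simp
    moreover have "x \<bullet> x \<ge> 0" by simp
    ultimately show ?thesis by (smt (verit) mult_nonpos_nonneg)
  qed
  have ex1: "\<exists>u. \<forall>i<n. is_onb (W i) (dim (W i)) (u i)"
    using exists_onb[OF sub] by metis
  have ex2: "\<exists>v. \<forall>i<n. is_onb (orthogonal_comp (W i)) (DIM('a) - dim (W i)) (v i)"
  proof -
    have "\<forall>i. \<exists>v. i < n \<longrightarrow> is_onb (orthogonal_comp (W i)) (DIM('a) - dim (W i)) v"
      using exists_onb[OF subspace_orthogonal_comp] dim_comp[OF sub] by metis
    then show ?thesis by metis
  qed
  have g1: "tight_frame A (SIGMA i:{..<n}. {..<dim (W i)}) (\<lambda>(i, j). a i *\<^sub>R u i j) \<longleftrightarrow> S3"
    if "\<forall>i<n. is_onb (W i) (dim (W i)) (u i)" for u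
    using generic[of n W "\<lambda>i. dim (W i)" u A a] sub that Apos unfolding S3_def by auto
  have g2: "tight_frame ((\<Sum>i<n. (a i)\<^sup>2) - A) (SIGMA i:{..<n}. {..<DIM('a) - dim (W i)}) (\<lambda>(i, j). a i *\<^sub>R v i j) \<longleftrightarrow> S4"
    if "\<forall>i<n. is_onb (orthogonal_comp (W i)) (DIM('a) - dim (W i)) (v i)" for v
  proof -
    have "tight_frame ((\<Sum>i<n. (a i)\<^sup>2) - A) (SIGMA i:{..<n}. {..<DIM('a) - dim (W i)}) (\<lambda>(i, j). a i *\<^sub>R v i j) \<longleftrightarrow>
      (\<Sum>i<n. (a i)\<^sup>2) - A > 0 \<and> S4"
      using generic[of n "\<lambda>i. orthogonal_comp (W i)" "\<lambda>i. DIM('a) - dim (W i)" v "(\<Sum>i<n. (a i)\<^sup>2) - A" a,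
          OF subspace_orthogonal_comp]
        that unfolding S4_def by (simp add: proj_comp sub)
    then show ?thesis using pos S34 by blast
  qed
  have "S1 \<longleftrightarrow> S3" unfolding S1_def using g1 ex1 by blast
  moreover have "S2 \<longleftrightarrow> S3" unfolding S2_def using g1 ex1 by blast
  moreover have "S5 \<longleftrightarrow> S4" unfolding S5_def using g2 ex2 by blast
  moreover have "S6 \<longleftrightarrow> S4" unfolding S6_def using g2 ex2 by blast
  ultimately show ?thesis using S34 by blast
qed

end
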